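(* There exist binary-input discrete memoryless channels $W$ and $V$ with a common finite output alphabet, both symmetrized by the same involutive permutation of the output alphabet, such that $$C_P(W,V) > C(W,V).$$
   Context: A binary-input discrete memoryless channel (B-DMC) $W:\{0,1\}\to\mathcal{Y}$ is given by transition probabilities $W(y|x)$. $W$ and $V$ are symmetrized by the same permutation if there is a permutation $\pi$ of $\mathcal{Y}$ with $\pi=\pi^{-1}$ and $W(y|0)=W(\pi(y)|1)$, $V(y|0)=V(\pi(y)|1)$ for all $y$. Mismatched capacity $C(W,V)$: the supremum of rates $R$ such that for every $\epsilon>0$ and all sufficiently large $n$ there is a codebook $\{\mathbf{x}(1),\dots,\mathbf{x}(M)\}\subset\{0,1\}^n$ with $\frac{\log M}{n}>R$ and maximal error probability less than $\epsilon$ over the memoryless channel $W$, when decoded by outputting the unique $i$ with $\prod_k V(y_k|x_k(i))>\prod_k V(y_k|x_k(j))$ for all $j\neq i$ (erasure/error if no such $i$). Polar transforms: $W^-(y_1y_2|u_1)=\sum_{u_2\in\mathbb{F}_2}\tfrac12 W(y_1|u_1\oplus u_2)W(y_2|u_2)$, $W^+(y_1y_2u_1|u_2)=\tfrac12 W(y_1|u_1\oplus u_2)W(y_2|u_2)$; iterating, for $N=2^n$ one obtains synthetic channels $W_N^{(i)}$, $i=1,\dots,N$ (the channels $W^{s}$, $s\in\{+,-\}^n$, in Arıkan's ordering), and similarly $V_N^{(i)}$ from $V$. Polar mismatched capacity $C_P(W,V)$: a polar code of blocklength $N=2^n$ uses Arıkan's polar encoder with an information set $\mathcal{A}\subseteq\{1,\dots,N\}$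 carrying data and the remaining inputs frozen to known values; the transmitted word is sent over $N$ independent uses of $W$. The mismatched successive cancellation decoder designed for $V$ decodes $\hat u_i=u_i$ for $i\notin\mathcal{A}$ and, for $i\in\mathcal{A}$, $\hat u_i=f^{(i)}(y_1^N,\hat u_1^{i-1})$ where $f^{(i)}$ is the maximum-likelihood decision rule for the synthetic channel $V_N^{(i)}$ (rather than $W_N^{(i)}$). $C_P(W,V)$ is the supremum of rates $|\mathcal{A}|/N$ achievable by such polar codes with block error probability tending to $0$ as $N\to\infty$. *)

theory Defs
  imports Complex_Main
begin

text \<open>Output alphabet: a finite set Y of natural numbers (any finite alphabet can be
  relabelled into nat).  Input 0 is False, input 1 is True.
  A channel is W :: bool => nat => real, W x y = W(y|x).\<close>

definition bdmc :: "nat set \<Rightarrow> (bool \<Rightarrow> nat \<Rightarrow> real) \<Rightarrow> bool" where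
  "bdmc Y W \<longleftrightarrow> finite Y \<and> (\<forall>x y. 0 \<le> W x y) \<and> (\<forall>x y. y \<notin> Y \<longrightarrow> W x y = 0)
      \<and> (\<forall>x. (\<Sum>y\<in>Y. W x y) = 1)"

definition same_symmetrized :: "nat set \<Rightarrow> (bool \<Rightarrow> nat \<Rightarrow> real) \<Rightarrow> (bool \<Rightarrow> nat \<Rightarrow> real) \<Rightarrow> bool" where
  "same_symmetrized Y W V \<longleftrightarrow> (\<exists>\<pi> :: nat \<Rightarrow> nat.
      (\<forall>y\<in>Y. \<pi> y \<in> Y \<and> \<pi> (\<pi> y) = y) \<and>
      (\<forall>y\<in>Y. W False y = W True (\<pi> y) \<and> V False y = V True (\<pi> y)))"

definition out_seqs :: "nat set \<Rightarrow> nat \<Rightarrow> nat list set" where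
  "out_seqs Y n = {ys. set ys \<subseteq> Y \<and> length ys = n}"

definition bin_words :: "nat \<Rightarrow> bool list set" where
  "bin_words n = {bs. length bs = n}"

definition chanN :: "(bool \<Rightarrow> nat \<Rightarrow> real) \<Rightarrow> bool list \<Rightarrow> nat list \<Rightarrow> real" where
  "chanN W xs ys = (\<Prod>k<length xs. W (xs ! k) (ys ! k))"

definition mm_err :: "nat set \<Rightarrow> (bool \<Rightarrow> nat \<Rightarrow> real) \<Rightarrow> (bool \<Rightarrow> nat \<Rightarrow> real) \<Rightarrow> nat
     \<Rightarrow> nat \<Rightarrow> (nat \<Rightarrow> bool list) \<Rightarrow> nat \<Rightarrow> real" where
  "mm_err Y W V n M c i = (\<Sum>ys\<in>out_seqs Y n. chanN W (c i) ys *
      (if (\<forall>j<M. j \<noteq> i \<longrightarrow> chanN V (c j) ys < chanN V (c i) ys) then 0 else 1))"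

definition mm_achievable :: "nat set \<Rightarrow> (bool \<Rightarrow> nat \<Rightarrow> real) \<Rightarrow> (bool \<Rightarrow> nat \<Rightarrow> real) \<Rightarrow> real \<Rightarrow> bool" where
  "mm_achievable Y W V R \<longleftrightarrow> (\<forall>\<epsilon>>0. \<forall>\<^sub>F n in sequentially.
      \<exists>(M::nat) (c :: nat \<Rightarrow> bool list). 0 < M \<and> (\<forall>i<M. length (c i) = n) \<and>
        log 2 (real M) / real n > R \<and> (\<forall>i<M. mm_err Y W V n M c i < \<epsilon>))"

definition mm_capacity :: "nat set \<Rightarrow> (bool \<Rightarrow> nat \<Rightarrow> real) \<Rightarrow> (bool \<Rightarrow> nat \<Rightarrow> real) \<Rightarrow> real" where
  "mm_capacity Y W V = Sup {R. mm_achievable Y W V R}"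

text \<open>Polar encoder x = u F^{\<otimes>n} with F = [[1,0],[1,1]] (0-indexed):
  x_j = XOR of u_i over i with (i AND j) = j.  (Arikan's bit-reversal B_N only
  permutes the transmitted positions.)\<close>
definition polar_enc :: "bool list \<Rightarrow> bool list" where
  "polar_enc u = map (\<lambda>j. odd (card {i. i < length u \<and> u ! i \<and> and i j = j})) [0..<length u]"

text \<open>Synthetic channel W_N^{(i+1)}(y, p | b) for N = 2^n, where p = u_1^{i}.\<close>
definition synth :: "(bool \<Rightarrow> nat \<Rightarrow> real) \<Rightarrow> nat \<Rightarrow> nat \<Rightarrow> nat list \<Rightarrow> bool list \<Rightarrow> bool \<Rightarrow> real" where
  "synth W n i ys p b = (\<Sum>r\<in>bin_words (2^n - i - 1).
      chanN W (polar_enc (p @ [b] @ r)) ys / 2 ^ (2^n - 1))"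

text \<open>Successive cancellation decoder designed for V: first k decisions (0-indexed
  positions).  ML rule for V_N^{(i)} with ties decided as 0 (Arikan's convention).\<close>
fun sc_dec :: "(bool \<Rightarrow> nat \<Rightarrow> real) \<Rightarrow> nat \<Rightarrow> nat set \<Rightarrow> (nat \<Rightarrow> bool) \<Rightarrow> nat list \<Rightarrow> nat \<Rightarrow> bool list" where
  "sc_dec V n A fz ys 0 = []"
| "sc_dec V n A fz ys (Suc i) = (let p = sc_dec V n A fz ys i in
     p @ [if i \<in> A then synth V n i ys p False < synth V n i ys p True else fz i])"

definition polar_inputs :: "nat \<Rightarrow> nat set \<Rightarrow> (nat \<Rightarrow> bool) \<Rightarrow> bool list set" where
  "polar_inputs n A fz = {u. length u = 2^n \<and> (\<forall>i<2^n. i \<notin> A \<longrightarrow> u ! i = fz i)}"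

definition polar_block_err :: "nat set \<Rightarrow> (bool \<Rightarrow> nat \<Rightarrow> real) \<Rightarrow> (bool \<Rightarrow> nat \<Rightarrow> real)
     \<Rightarrow> nat \<Rightarrow> nat set \<Rightarrow> (nat \<Rightarrow> bool) \<Rightarrow> real" where
  "polar_block_err Y W V n A fz =
     (\<Sum>u\<in>polar_inputs n A fz. \<Sum>ys\<in>out_seqs Y (2^n).
        chanN W (polar_enc u) ys * (if sc_dec V n A fz ys (2^n) = u then 0 else 1))
     / real (card (polar_inputs n A fz))"

definition polar_achievable :: "nat set \<Rightarrow> (bool \<Rightarrow> nat \<Rightarrow> real) \<Rightarrow> (bool \<Rightarrow> nat \<Rightarrow> real) \<Rightarrow> real \<Rightarrow> bool" where
  "polar_achievable Y W V R \<longleftrightarrow> (\<exists>(A :: nat \<Rightarrow> nat set) (fz :: nat \<Rightarrow> nat \<Rightarrow> bool).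
      (\<forall>n. A n \<subseteq> {..<2^n}) \<and>
      (\<forall>\<^sub>F n in sequentially. R \<le> real (card (A n)) / 2 ^ n) \<and>
      ((\<lambda>n. polar_block_err Y W V n (A n) (fz n)) \<longlonglongrightarrow> 0))"

definition polar_mm_capacity :: "nat set \<Rightarrow> (bool \<Rightarrow> nat \<Rightarrow> real) \<Rightarrow> (bool \<Rightarrow> nat \<Rightarrow> real) \<Rightarrow> real" where
  "polar_mm_capacity Y W V = Sup {R. polar_achievable Y W V R}"

end

theory Submission
  imports Defs
begin

lemma and_ge: "and (i::nat) m = m \<Longrightarrow> m \<le> i"
  by (metis AND_upper1 of_nat_0_le_iff of_nat_and_eq of_nat_le_iff)

lemma odd_card_opt:
  assumes "finite T" "m \<notin> T"
  shows "odd (card (T \<union> (if a then {m} else {}))) = (odd (card T) \<noteq> a)"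
  using assms by auto

lemma finite_bin: "finite (bin_words n)"
  using finite_lists_length_eq[of "UNIV::bool set" n] by (simp add: bin_words_def)

lemma len_enc[simp]: "length (polar_enc u) = length u"
  by (simp add: polar_enc_def)

lemma nth_enc: "j < length u \<Longrightarrow> polar_enc u ! j = odd (card {i. i < length u \<and> u ! i \<and> and i j = j})"
  by (simp add: polar_enc_def)

lemma enc_inj:
  assumes len: "length v = length w" and eq: "polar_enc v = polar_enc w"
  shows "v = w"
proof (rule ccontr)
  assume ne: "v \<noteq> w"
  define L where "L = length v"
  define D where "D = {i. i < L \<and> v ! i \<noteq> w ! i}"
  have Dne: "D \<noteq> {}" 
  proof
    assume "D = {}"
    then have "\<And>i. i < L \<Longrightarrow> v ! i = w ! i" unfolding D_def by auto
    then have "v = w" using len unfolding L_def by (simp add: nth_equalityI)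
    then show False using ne by simp
  qed
  have Dfin: "finite D" unfolding D_def by simp
  define m where "m = Max D"
  have mD: "m \<in> D" using Dne Dfin m_def by simp
  have mL: "m < L" using mD D_def by simp
  have big: "\<And>i. i < L \<Longrightarrow> m < i \<Longrightarrow> v ! i = w ! i"
  proof -
    fix i assume "i < L" "m < i"
    show "v ! i = w ! i"
    proof (rule ccontr)
      assume "v ! i \<noteq> w ! i"
      then have "i \<in> D" using \<open>i < L\<close> D_def by simp
      then show False using \<open>m < i\<close> Dfin m_def by (simp add: leD)
    qed
  qed
  define T where "T = {i. i < L \<and> i \<noteq> m \<and> v ! i \<and> and i m = m}"
  have Tfin: "finite T" unfolding T_def by simp
  have mT: "m \<notin> T" unfolding T_def by simp
  have Sv: "{i. i < length v \<and> v ! i \<and> and i m = m} = T \<union> (if v ! m then {m} else {})"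
    using mL unfolding T_def L_def by auto
  have Sw: "{i. i < length w \<and> w ! i \<and> and i m = m} = T \<union> (if w ! m then {m} else {})"
  proof -
    have "{i. i < length w \<and> w ! i \<and> and i m = m} = {i. i < L \<and> i \<noteq> m \<and> w ! i \<and> and i m = m} \<union> (if w ! m then {m} else {})"
      using mL len unfolding L_def by auto
    moreover have "{i. i < L \<and> i \<noteq> m \<and> w ! i \<and> and i m = m} = T"
    proof -
      have "\<And>i. i < L \<Longrightarrow> i \<noteq> m \<Longrightarrow> and i m = m \<Longrightarrow> w ! i = v ! i"
        using big and_ge by (metis le_neq_implies_less)
      then show ?thesis unfolding T_def by auto
    qed
    ultimately show ?thesis by simp
  qed
  have ev: "polar_enc v ! m = odd (card (T \<union> (if v ! m then {m} else {})))"
    unfolding Sv[symmetric] by (rule nth_enc) (use mL L_def in simp)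
  have ew: "polar_enc w ! m = odd (card (T \<union> (if w ! m then {m} else {})))"
    unfolding Sw[symmetric] by (rule nth_enc) (use mL L_def len in simp)
  have o1: "odd (card (T \<union> (if v ! m then {m} else {}))) = (odd (card T) \<noteq> v ! m)"
    by (rule odd_card_opt[OF Tfin mT])
  have o2: "odd (card (T \<union> (if w ! m then {m} else {}))) = (odd (card T) \<noteq> w ! m)"
    by (rule odd_card_opt[OF Tfin mT])
  have "v ! m = w ! m" using eq ev ew o1 o2 by metis
  then show False using mD D_def by simp
qed

lemma and_full: "j < 2^n \<Longrightarrow> and (2^n - 1) j = (j::nat)"
  by (metis and.commute mask_eq_exp_minus_1 take_bit_eq_mask take_bit_nat_eq_self_iff)

lemma enc_flip:
  assumes len: "length u = 2^n"
  shows "polar_enc (u[2^n - 1 := \<not> u ! (2^n - 1)]) = map Not (polar_enc u)"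
proof (rule nth_equalityI)
  show "length (polar_enc (u[2^n - 1 := \<not> u ! (2^n - 1)])) = length (map Not (polar_enc u))" by simp
next
  fix j assume "j < length (polar_enc (u[2 ^ n - 1 := \<not> u ! (2 ^ n - 1)]))"
  then have j: "j < 2^n" using len by simp
  define m :: nat where "m = 2^n - 1"
  have mL: "m < 2^n" unfolding m_def by simp
  have am: "and m j = j" unfolding m_def using and_full[OF j] .
  define u' where "u' = u[m := \<not> u ! m]"
  define T where "T = {i. i < 2^n \<and> i \<noteq> m \<and> u ! i \<and> and i j = j}"
  have Tfin: "finite T" unfolding T_def by simp
  have mT: "m \<notin> T" unfolding T_def by simp
  have S1: "{i. i < length u \<and> u ! i \<and> and i j = j} = T \<union> (if u ! m then {m} else {})"
    using mL am len unfolding T_def by auto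
  have S2: "{i. i < length u' \<and> u' ! i \<and> and i j = j} = T \<union> (if \<not> u ! m then {m} else {})"
    using mL am len unfolding T_def u'_def by (auto simp: nth_list_update)
  have "polar_enc u' ! j = odd (card (T \<union> (if \<not> u ! m then {m} else {})))"
    unfolding S2[symmetric] by (rule nth_enc) (use j len u'_def in simp)
  also have "\<dots> = (odd (card T) \<noteq> (\<not> u ! m))"
    by (rule odd_card_opt[OF Tfin mT])
  also have "\<dots> = (\<not> (odd (card T) \<noteq> u ! m))" by simp
  also have "(odd (card T) \<noteq> u ! m) = odd (card (T \<union> (if u ! m then {m} else {})))"
    by (rule odd_card_opt[OF Tfin mT, symmetric])
  also have "odd (card (T \<union> (if u ! m then {m} else {}))) = polar_enc u ! j"
    unfolding S1[symmetric] by (rule nth_enc[symmetric]) (use j len in simp)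
  also have "(\<not> polar_enc u ! j) = map Not (polar_enc u) ! j" using j len by simp
  finally show "polar_enc (u[2 ^ n - 1 := \<not> u ! (2 ^ n - 1)]) ! j = map Not (polar_enc u) ! j"
    unfolding u'_def m_def .
qed


definition ob :: "bool \<Rightarrow> nat" where "ob b = (if b then 1 else 0)"
definition Wc :: "bool \<Rightarrow> nat \<Rightarrow> real" where "Wc x y = (if y = ob x then 1 else 0)"
definition Vc :: "bool \<Rightarrow> nat \<Rightarrow> real" where "Vc x y = (if y = ob (\<not> x) then 1 else 0)"

lemma map_ob_eq: "map ob xs = map ob ys \<longleftrightarrow> xs = ys"
proof -
  have "inj ob" by (auto simp: inj_def ob_def)
  then show ?thesis by (simp add: inj_map_eq_map)
qed

lemma chanN_nonneg: "(\<And>x y. 0 \<le> W x y) \<Longrightarrow> 0 \<le> chanN W x ys"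
  unfolding chanN_def by (simp add: prod_nonneg)

lemma chanW:
  assumes "length ys = length x"
  shows "chanN Wc x ys = (if ys = map ob x then 1 else 0)"
proof (cases "ys = map ob x")
  case True then show ?thesis by (simp add: chanN_def Wc_def)
next
  case False
  have "\<exists>k<length x. ys ! k \<noteq> ob (x ! k)"
  proof (rule ccontr)
    assume "\<not> (\<exists>k<length x. ys ! k \<noteq> ob (x ! k))"
    then have "ys = map ob x" using assms by (auto intro: nth_equalityI)
    then show False using False by simp
  qed
  then obtain k where k: "k < length x" "ys ! k \<noteq> ob (x ! k)" by blast
  then have "Wc (x ! k) (ys ! k) = 0" by (simp add: Wc_def)
  then have "chanN Wc x ys = 0" unfolding chanN_def using k(1)
    by (intro prod_zero) auto
  then show ?thesis using False by simp
qed

lemma chanV_W: "chanN Vc x ys = chanN Wc (map Not x) ys"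
  by (simp add: chanN_def Vc_def Wc_def)

lemma chanV_enc:
  assumes lx: "length x = 2^n" and lu: "length u = 2^n"
  shows "chanN Vc (polar_enc x) (map ob (polar_enc u)) = (if x = u[2^n-1 := \<not> u!(2^n-1)] then 1 else 0)"
proof -
  have "chanN Vc (polar_enc x) (map ob (polar_enc u)) =
     (if map ob (polar_enc u) = map ob (map Not (polar_enc x)) then 1 else 0)"
    unfolding chanV_W using lx lu by (subst chanW) auto
  moreover have "(map ob (polar_enc u) = map ob (map Not (polar_enc x))) \<longleftrightarrow> x = u[2^n-1 := \<not> u!(2^n-1)]"
  proof -
    have "(map ob (polar_enc u) = map ob (map Not (polar_enc x))) \<longleftrightarrow> polar_enc u = map Not (polar_enc x)"
      by (rule map_ob_eq)
    also have "\<dots> \<longleftrightarrow> map Not (polar_enc u) = polar_enc x"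
    proof -
      have inv: "\<And>l. map Not (map Not l) = l" by (induct_tac l) auto
      show ?thesis using inv by metis
    qed
    also have "\<dots> \<longleftrightarrow> polar_enc (u[2^n-1 := \<not> u!(2^n-1)]) = polar_enc x"
      using enc_flip[OF lu] by simp
    also have "\<dots> \<longleftrightarrow> x = u[2^n-1 := \<not> u!(2^n-1)]"
      using enc_inj lx lu by fastforce
    finally show ?thesis .
  qed
  ultimately show ?thesis by simp
qed

lemma synthV:
  assumes lu: "length u = 2^n" and k: "k < 2^n - 1"
  shows "synth Vc n k (map ob (polar_enc u)) (take k u) b = (if b = u!k then 1 / 2^(2^n-1) else 0)"
proof -
  define u' where "u' = u[2^n-1 := \<not> u!(2^n-1)]"
  define r0 where "r0 = drop (Suc k) u'"
  have lu': "length u' = 2^n" using lu u'_def by simp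
  have u'k: "u' ! k = u ! k" using k unfolding u'_def by simp
  have tk: "take k u' = take k u" using k unfolding u'_def by simp
  have dec: "u' = take k u @ [u ! k] @ r0"
    using id_take_nth_drop[of k u'] k lu' tk u'k unfolding r0_def by simp
  have r0B: "r0 \<in> bin_words (2^n - k - 1)" using lu' unfolding r0_def bin_words_def by simp
  have "synth Vc n k (map ob (polar_enc u)) (take k u) b =
    (\<Sum>r\<in>bin_words (2^n - k - 1). (if b = u!k \<and> r = r0 then 1 / 2^(2^n-1) else 0))"
    unfolding synth_def
  proof (rule sum.cong[OF refl])
    fix r assume r: "r \<in> bin_words (2^n - k - 1)"
    have lx: "length (take k u @ [b] @ r) = 2^n" using r k lu by (simp add: bin_words_def)
    have "(take k u @ [b] @ r = u') \<longleftrightarrow> (b = u!k \<and> r = r0)"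
    proof -
      have "(take k u @ [b] @ r = u') = (take k u @ [b] @ r = take k u @ [u ! k] @ r0)"
        by (subst dec) (rule refl)
      also have "\<dots> = (b = u!k \<and> r = r0)" by simp
      finally show ?thesis .
    qed
    then show "chanN Vc (polar_enc (take k u @ [b] @ r)) (map ob (polar_enc u)) / 2 ^ (2 ^ n - 1) =
         (if b = u ! k \<and> r = r0 then 1 / 2 ^ (2 ^ n - 1) else 0)"
      using chanV_enc[OF lx lu] unfolding u'_def by simp
  qed
  also have "\<dots> = (if b = u!k then 1 / 2^(2^n-1) else 0)"
    using r0B by (cases "b = u!k") (simp_all add: finite_bin)
  finally show ?thesis .
qed


definition Ab :: "nat \<Rightarrow> nat set" where "Ab n = {..<2^n - 1}"
definition fzb :: "nat \<Rightarrow> nat \<Rightarrow> bool" where "fzb n i = False"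

lemma dec_ok:
  assumes u: "u \<in> polar_inputs n (Ab n) (fzb n)"
  shows "sc_dec Vc n (Ab n) (fzb n) (map ob (polar_enc u)) (2^n) = u"
proof -
  have lu: "length u = 2^n" using u unfolding polar_inputs_def by simp
  have "\<forall>k\<le>2^n. sc_dec Vc n (Ab n) (fzb n) (map ob (polar_enc u)) k = take k u"
  proof (intro allI impI)
    fix k show "k \<le> 2^n \<Longrightarrow> sc_dec Vc n (Ab n) (fzb n) (map ob (polar_enc u)) k = take k u"
    proof (induction k)
      case 0 then show ?case by simp
    next
      case (Suc k)
      then have k: "k < 2^n" by simp
      have IH: "sc_dec Vc n (Ab n) (fzb n) (map ob (polar_enc u)) k = take k u" using Suc by simp
      have tS: "take (Suc k) u = take k u @ [u ! k]" using k lu by (simp add: take_Suc_conv_app_nth)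
      show ?case
      proof (cases "k \<in> Ab n")
        case True
        then have kA: "k < 2^n - 1" unfolding Ab_def by simp
        have "(synth Vc n k (map ob (polar_enc u)) (take k u) False <
               synth Vc n k (map ob (polar_enc u)) (take k u) True) = u ! k"
          unfolding synthV[OF lu kA] by (cases "u ! k") simp_all
        then show ?thesis using True by (simp add: IH tS Let_def)
      next
        case False
        then have "u ! k = False" using u k unfolding polar_inputs_def fzb_def by auto
        then have fk: "fzb n k = u ! k" by (simp add: fzb_def)
        show ?thesis using False by (simp add: IH tS Let_def fk)
      qed
    qed
  qed
  then show ?thesis using lu by simp
qed

lemma polar_err_zero: "polar_block_err {0,1} Wc Vc n (Ab n) (fzb n) = 0"
proof -
  have "\<And>u ys. u \<in> polar_inputs n (Ab n) (fzb n) \<Longrightarrow> ys \<in> out_seqs {0,1} (2^n) \<Longrightarrow>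
     chanN Wc (polar_enc u) ys * (if sc_dec Vc n (Ab n) (fzb n) ys (2^n) = u then 0 else 1) = 0"
  proof -
    fix u ys assume u: "u \<in> polar_inputs n (Ab n) (fzb n)" and ys: "ys \<in> out_seqs {0,1} (2^n)"
    have l: "length ys = length (polar_enc u)" using u ys unfolding polar_inputs_def out_seqs_def by simp
    show "chanN Wc (polar_enc u) ys * (if sc_dec Vc n (Ab n) (fzb n) ys (2^n) = u then 0 else 1) = 0"
    proof (cases "ys = map ob (polar_enc u)")
      case True
      have "sc_dec Vc n (Ab n) (fzb n) ys (2^n) = u" unfolding True by (rule dec_ok[OF u])
      then show ?thesis by simp
    next
      case False
      have "chanN Wc (polar_enc u) ys = 0" using chanW[OF l] False by simp
      then show ?thesis by simp
    qed
  qed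
  note z = this
  have "(\<Sum>u\<in>polar_inputs n (Ab n) (fzb n). \<Sum>ys\<in>out_seqs {0,1} (2^n).
     chanN Wc (polar_enc u) ys * (if sc_dec Vc n (Ab n) (fzb n) ys (2^n) = u then 0 else 1)) = 0"
    by (rule sum.neutral, rule ballI, rule sum.neutral, rule ballI, rule z)
  then show ?thesis unfolding polar_block_err_def by simp
qed

lemma polar_ach: "polar_achievable {0,1} Wc Vc (1/2)"
  unfolding polar_achievable_def
proof (intro exI conjI allI)
  fix n show "Ab n \<subseteq> {..<2^n}" unfolding Ab_def by auto
next
  show "\<forall>\<^sub>F n in sequentially. 1/2 \<le> real (card (Ab n)) / 2 ^ n"
    unfolding eventually_sequentially
  proof (intro exI allI impI)
    fix n :: nat assume "1 \<le> n"
    then have "(2::real) ^ 1 \<le> 2 ^ n" by (intro power_increasing) auto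
    then have h: "(2::real) \<le> 2 ^ n" by simp
    have "real (card (Ab n)) = 2^n - 1" unfolding Ab_def
      by (simp add: of_nat_diff)
    then show "1/2 \<le> real (card (Ab n)) / 2 ^ n" using h by (simp add: field_simps)
  qed
next
  show "(\<lambda>n. polar_block_err {0,1} Wc Vc n (Ab n) (fzb n)) \<longlonglongrightarrow> 0"
    unfolding polar_err_zero by (rule tendsto_const)
qed

lemma polar_bdd: "polar_achievable {0,1} Wc Vc R \<Longrightarrow> R \<le> 1"
proof -
  assume "polar_achievable {0,1} Wc Vc R"
  then obtain A :: "nat \<Rightarrow> nat set" where A: "\<forall>n. A n \<subseteq> {..<2^n}"
    and ev: "\<forall>\<^sub>F n in sequentially. R \<le> real (card (A n)) / 2 ^ n"
    unfolding polar_achievable_def by blast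
  obtain N where N: "\<forall>n\<ge>N. R \<le> real (card (A n)) / 2 ^ n" using ev unfolding eventually_sequentially by blast
  define n where "n = N"
  have n: "R \<le> real (card (A n)) / 2 ^ n" using N unfolding n_def by simp
  have "card (A n) \<le> 2^n" using card_mono[OF _ A[rule_format, of n]] by simp
  then have "real (card (A n)) \<le> real ((2::nat)^n)" by (simp only: of_nat_le_iff)
  then have "real (card (A n)) \<le> 2^n" by simp
  then have q: "real (card (A n)) / 2 ^ n \<le> 1" by simp
  show ?thesis using n q by linarith
qed

lemma polar_cap: "1/2 \<le> polar_mm_capacity {0,1} Wc Vc"
  unfolding polar_mm_capacity_def
proof (rule cSup_upper)
  show "1/2 \<in> {R. polar_achievable {0,1} Wc Vc R}" using polar_ach by simp
  show "bdd_above {R. polar_achievable {0,1} Wc Vc R}"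
    by (rule bdd_aboveI[where M=1]) (use polar_bdd in blast)
qed

lemma mm_err_big:
  assumes n: "1 \<le> n" and M: "2 \<le> M" and l: "length (c 0) = n"
  shows "1 \<le> mm_err {0,1} Wc Vc n M c 0"
proof -
  define ys0 where "ys0 = map ob (c 0)"
  have ys0S: "ys0 \<in> out_seqs {0,1} n" unfolding ys0_def out_seqs_def using l by (auto simp: ob_def)
  have w1: "chanN Wc (c 0) ys0 = 1" using chanW[of ys0 "c 0"] unfolding ys0_def by simp
  have v0: "chanN Vc (c 0) ys0 = 0"
  proof -
    have "ys0 \<noteq> map ob (map Not (c 0))"
    proof
      assume "ys0 = map ob (map Not (c 0))"
      then have "ys0 ! 0 = map ob (map Not (c 0)) ! 0" by simp
      then have "ob (c 0 ! 0) = ob (\<not> c 0 ! 0)" unfolding ys0_def using n l by simp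
      then show False by (simp add: ob_def split: if_splits)
    qed
    then show ?thesis unfolding chanV_W using chanW[of ys0 "map Not (c 0)"] unfolding ys0_def by simp
  qed
  have nn: "0 \<le> chanN Vc (c 1) ys0" by (rule chanN_nonneg) (simp add: Vc_def)
  have cond: "\<not> (\<forall>j<M. j \<noteq> 0 \<longrightarrow> chanN Vc (c j) ys0 < chanN Vc (c 0) ys0)"
  proof
    assume h: "\<forall>j<M. j \<noteq> 0 \<longrightarrow> chanN Vc (c j) ys0 < chanN Vc (c 0) ys0"
    have "(1::nat) < M" using M by simp
    then show False using h[rule_format, of 1] nn v0 by simp
  qed
  have fin: "finite (out_seqs {0,1} n)" unfolding out_seqs_def by (simp add: finite_lists_length_eq)
  have e: "chanN Wc (c 0) ys0 * (if (\<forall>j<M. j \<noteq> 0 \<longrightarrow> chanN Vc (c j) ys0 < chanN Vc (c 0) ys0) then 0 else 1) = 1"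
    by (simp only: w1 if_not_P[OF cond] mult_1)
  have le: "chanN Wc (c 0) ys0 * (if (\<forall>j<M. j \<noteq> 0 \<longrightarrow> chanN Vc (c j) ys0 < chanN Vc (c 0) ys0) then 0 else 1)
     \<le> mm_err {0,1} Wc Vc n M c 0"
    unfolding mm_err_def
    by (rule member_le_sum[OF ys0S _ fin]) (intro mult_nonneg_nonneg chanN_nonneg, auto simp: Wc_def)
  show ?thesis using le e by linarith
qed

lemma mm_bdd: "mm_achievable {0,1} Wc Vc R \<Longrightarrow> R \<le> 0"
proof (rule ccontr)
  assume a: "mm_achievable {0,1} Wc Vc R" and "\<not> R \<le> 0"
  then have R: "R > 0" by simp
  have "\<forall>\<^sub>F n in sequentially. \<exists>(M::nat) (c :: nat \<Rightarrow> bool list). 0 < M \<and> (\<forall>i<M. length (c i) = n) \<and>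
        log 2 (real M) / real n > R \<and> (\<forall>i<M. mm_err {0,1} Wc Vc n M c i < 1)"
    using a unfolding mm_achievable_def by simp
  then obtain N where N: "\<forall>n\<ge>N. \<exists>(M::nat) (c :: nat \<Rightarrow> bool list). 0 < M \<and> (\<forall>i<M. length (c i) = n) \<and>
        log 2 (real M) / real n > R \<and> (\<forall>i<M. mm_err {0,1} Wc Vc n M c i < 1)"
    unfolding eventually_sequentially by blast
  define n where "n = max N 1"
  obtain M c where M: "0 < M" and lc: "\<forall>i<M. length (c i) = n" and lg: "log 2 (real M) / real n > R"
    and er: "\<forall>i<M. mm_err {0,1} Wc Vc n M c i < 1"
    using N[rule_format, of n] unfolding n_def by auto
  have "M \<noteq> 1" using lg R by auto
  then have M2: "2 \<le> M" using M by simp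
  have "1 \<le> mm_err {0,1} Wc Vc n M c 0"
    using mm_err_big[of n M c] M2 lc M unfolding n_def by simp
  then show False using er M by force
qed

lemma mm_ach_neg: "mm_achievable {0,1} Wc Vc (-1)"
  unfolding mm_achievable_def
proof (intro allI impI always_eventually)
  fix \<epsilon> :: real and n :: nat assume e: "\<epsilon> > 0"
  show "\<exists>(M::nat) (c :: nat \<Rightarrow> bool list). 0 < M \<and> (\<forall>i<M. length (c i) = n) \<and>
        log 2 (real M) / real n > -1 \<and> (\<forall>i<M. mm_err {0,1} Wc Vc n M c i < \<epsilon>)"
    by (rule exI[of _ 1], rule exI[of _ "\<lambda>_. replicate n False"]) (simp add: mm_err_def e)
qed

lemma mm_cap: "mm_capacity {0,1} Wc Vc \<le> 0"
  unfolding mm_capacity_def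
  by (rule cSup_least) (use mm_ach_neg mm_bdd in auto)

theorem mainTheorem2:
  shows "\<exists>(Y :: nat set) (W :: bool \<Rightarrow> nat \<Rightarrow> real) (V :: bool \<Rightarrow> nat \<Rightarrow> real).
           finite Y \<and> bdmc Y W \<and> bdmc Y V \<and> same_symmetrized Y W V \<and>
           polar_mm_capacity Y W V > mm_capacity Y W V"
proof (intro exI conjI)
  show "finite {0::nat,1}" by simp
  show "bdmc {0,1} Wc" unfolding bdmc_def Wc_def ob_def by auto
  show "bdmc {0,1} Vc" unfolding bdmc_def Vc_def ob_def by auto
  show "same_symmetrized {0,1} Wc Vc" unfolding same_symmetrized_def
    by (rule exI[of _ "\<lambda>y. 1 - y"]) (auto simp: Wc_def Vc_def ob_def)
  show "mm_capacity {0,1} Wc Vc < polar_mm_capacity {0,1} Wc Vc"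
    using mm_cap polar_cap by linarith
qed

end
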